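(* Let $p$ be prime, let $c_1,\dots,c_k$ be positive integers, and let $v\ge2$ be an integer coprime to $p$. Given any interval $\tilde J\subset[0,1]$ and any $\varepsilon>0$, there exists a $v$-adic interval $I\subset\tilde J$ such that for every $i\in\{1,\dots,k\}$, letting $J^i$ be the smallest $pc_i$-adic interval containing $I$, there is a point $\zeta(J^i)$ which is an interior endpoint of one of the $pc_i$-adic children of $J^i$ (i.e. an endpoint of a child lying in the interior of $J^i$) satisfying $$0<\zeta(J^i)-Z(I)\le\varepsilon|I|.$$
   Context: For a positive integer $N$, the $N$-adic intervals are $[\frac{k-1}{N^s},\frac{k}{N^s})$, $s,k\in\mathbb{Z}$, with $N$-adic children the $N$ equal-length subintervals $[\frac{k-1}{N^s}+\frac{j-1}{N^{s+1}},\frac{k-1}{N^s}+\frac{j}{N^{s+1}})$, $1\le j\le N$. For a $v$-adic interval $I=[\frac{k-1}{v^s},\frac{k}{v^s})$, $Z(I)=\frac{k-1}{v^s}+\frac{v-1}{v^{s+1}}$ is the left endpoint of its last $v$-adic child. $|I|$ is the length of $I$. *)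

theory Defs
  imports "HOL-Analysis.Analysis"
begin

definition nadic_left :: "nat \<Rightarrow> int \<Rightarrow> int \<Rightarrow> real" where
  "nadic_left N s k = of_int (k - 1) / (real N powi s)"

definition nadic_right :: "nat \<Rightarrow> int \<Rightarrow> int \<Rightarrow> real" where
  "nadic_right N s k = of_int k / (real N powi s)"

definition nadic_interval :: "nat \<Rightarrow> int \<Rightarrow> int \<Rightarrow> real set" where
  "nadic_interval N s k = {nadic_left N s k ..< nadic_right N s k}"

definition is_nadic :: "nat \<Rightarrow> real set \<Rightarrow> bool" where
  "is_nadic N I \<longleftrightarrow> (\<exists>s k. I = nadic_interval N s k)"

text \<open>The j-th N-adic child (1 <= j <= N) of nadic_interval N s k is
  [(k-1)/N^s + (j-1)/N^(s+1), (k-1)/N^s + j/N^(s+1)) = nadic_interval N (s+1) ((k-1)*N + j).\<close>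
definition nadic_child :: "nat \<Rightarrow> int \<Rightarrow> int \<Rightarrow> int \<Rightarrow> real set" where
  "nadic_child N s k j = nadic_interval N (s + 1) ((k - 1) * int N + j)"

definition interior_child_endpoint :: "nat \<Rightarrow> int \<Rightarrow> int \<Rightarrow> real \<Rightarrow> bool" where
  "interior_child_endpoint N s k \<zeta> \<longleftrightarrow>
     (\<exists>j\<in>{1..int N}.
        (\<zeta> = nadic_left N (s + 1) ((k - 1) * int N + j) \<or>
         \<zeta> = nadic_right N (s + 1) ((k - 1) * int N + j))) \<and>
     \<zeta> \<in> interior (nadic_interval N s k)"

text \<open>Z(I): left endpoint of the last v-adic child of nadic_interval v s k.\<close>
definition Zpt :: "nat \<Rightarrow> int \<Rightarrow> int \<Rightarrow> real" where
  "Zpt v s k = of_int (k - 1) / (real v powi s) + (real v - 1) / (real v powi (s + 1))"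

end

theory Submission
  imports Defs "HOL-Number_Theory.Number_Theory"
begin

lemma powi_l1: "l \<ge> 1 \<Longrightarrow> (x::real) powi (int l - 1) = x ^ (l - 1)"
  by (metis of_nat_1 of_nat_diff power_int_of_nat)

lemma powi_addnat: "(x::real) powi (a + int n) = x powi a * x ^ n" if "x \<noteq> 0"
  using that by (simp add: power_int_add)

lemma grid_min:
  fixes N l :: nat and x :: real and s2 t2 :: int
  assumes N: "N \<ge> 2" and l: "l \<ge> 1"
    and q: "real N ^ l * x \<in> \<int>" and r: "real N ^ (l-1) * x \<notin> \<int>"
    and lt: "nadic_left N s2 t2 < x" and rt: "x < nadic_right N s2 t2"
  shows "nadic_interval N (int l - 1) (\<lfloor>real N^(l-1) * x\<rfloor> + 1) \<subseteq> nadic_interval N s2 t2"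
proof -
  define D where "D = real N powi s2"
  have Dpos: "D > 0" using N by (simp add: D_def)
  have lt': "of_int (t2 - 1) < D * x" using lt Dpos by (simp add: nadic_left_def D_def[symmetric] pos_divide_less_eq mult.commute)
  have rt': "D * x < of_int t2" using rt Dpos by (simp add: nadic_right_def D_def[symmetric] pos_less_divide_eq mult.commute)
  show ?thesis
  proof (cases "s2 \<ge> int l")
    case True
    have "D = real N powi (int l + int (nat (s2 - int l)))" using True by (simp add: D_def)
    also have "\<dots> = real N ^ l * real N ^ nat (s2 - int l)" using N by (subst powi_addnat) auto
    finally have "D * x = real N ^ nat (s2 - int l) * (real N ^ l * x)" by simp
    moreover obtain z where "real N ^ l * x = of_int z" using q by (auto elim: Ints_cases)
    ultimately have "D * x = of_int (int N ^ nat (s2 - int l) * z)" by simp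
    then obtain w where w: "D * x = of_int w" by blast
    have "t2 - 1 < w" "w < t2" using lt' rt' unfolding w by simp_all
    hence False by linarith
    thus ?thesis ..
  next
    case False
    define d where "d = nat (int l - 1 - s2)"
    define E where "E = real N ^ (l-1)"
    have Epos: "E > 0" using N by (simp add: E_def)
    have "E = real N powi (int l - 1)" using l by (simp add: E_def powi_l1)
    also have "\<dots> = real N powi (s2 + int d)" using False by (simp add: d_def)
    also have "\<dots> = D * real N ^ d" using N unfolding D_def by (subst powi_addnat) auto
    finally have ED: "E = D * real N ^ d" .
    define f where "f = \<lfloor>E * x\<rfloor>"
    have Nd: "real N ^ d > 0" using N by simp
    have "of_int (t2 - 1) * real N ^ d < (D * x) * real N ^ d" using lt' Nd by (rule mult_strict_right_mono)
    hence "of_int ((t2 - 1) * int N ^ d) < E * x" using ED by (simp add: ac_simps)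
    hence f1: "(t2 - 1) * int N ^ d \<le> f" unfolding f_def by (meson le_floor_iff less_eq_real_def)
    have "(D * x) * real N ^ d < of_int t2 * real N ^ d" using rt' Nd by (rule mult_strict_right_mono)
    hence "E * x < of_int (t2 * int N ^ d)" using ED by (simp add: ac_simps)
    hence f2: "f + 1 \<le> t2 * int N ^ d" unfolding f_def by (meson floor_less_iff zless_imp_add1_zle)
    have eq1: "nadic_left N s2 t2 = of_int ((t2 - 1) * int N ^ d) / E"
      using ED Dpos N by (simp add: nadic_left_def D_def[symmetric])
    have eq2: "nadic_right N s2 t2 = of_int (t2 * int N ^ d) / E"
      using ED Dpos N by (simp add: nadic_right_def D_def[symmetric])
    have eq3: "nadic_left N (int l - 1) (f + 1) = of_int f / E" using l by (simp add: nadic_left_def E_def powi_l1)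
    have eq4: "nadic_right N (int l - 1) (f + 1) = of_int (f+1) / E" using l by (simp add: nadic_right_def E_def powi_l1)
    have g1: "real_of_int ((t2-1)*int N^d) \<le> of_int f" using f1 by (simp only: of_int_le_iff)
    have g2: "real_of_int (f+1) \<le> of_int (t2 * int N ^ d)" using f2 by (simp only: of_int_le_iff)
    have "of_int ((t2 - 1) * int N ^ d) / E \<le> of_int f / E" using g1 Epos by (intro divide_right_mono) auto
    moreover have "of_int (f+1) / E \<le> of_int (t2 * int N ^ d) / E" using g2 Epos by (intro divide_right_mono) auto
    ultimately show ?thesis unfolding nadic_interval_def eq1 eq2 eq3[unfolded f_def E_def] eq4[unfolded f_def E_def]
      by (auto simp: f_def E_def)
  qed
qed
lemma per_i:
  fixes N L :: nat and x a b :: real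
  assumes N: "N \<ge> 2" and xZ: "x \<notin> \<int>" and xL: "real N ^ L * x \<in> \<int>"
    and ax: "a < x" and xb: "x < b" and ha: "x - a \<le> 1 / real N ^ L" and hb: "b - x \<le> 1 / real N ^ L"
  shows "\<exists>s' t'. {a..<b} \<subseteq> nadic_interval N s' t' \<and>
     (\<forall>s'' t''. {a..<b} \<subseteq> nadic_interval N s'' t'' \<longrightarrow> nadic_interval N s' t' \<subseteq> nadic_interval N s'' t'') \<and>
     interior_child_endpoint N s' t' x"
proof -
  define l where "l = (LEAST l. real N ^ l * x \<in> \<int>)"
  have Nl: "real N ^ l * x \<in> \<int>" unfolding l_def by (rule LeastI[of _ L]) (rule xL)
  have lL: "l \<le> L" unfolding l_def by (rule Least_le) (rule xL)
  have l1: "l \<ge> 1" proof (rule ccontr)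
    assume "\<not> l \<ge> 1" hence "l = 0" by simp
    with Nl xZ show False by simp
  qed
  have r: "real N ^ (l-1) * x \<notin> \<int>" using not_less_Least[of "l-1" "\<lambda>l. real N ^ l * x \<in> \<int>"] l1
    unfolding l_def[symmetric] by simp
  define E where "E = real N ^ (l-1)"
  define f where "f = \<lfloor>E * x\<rfloor>"
  obtain q where q: "real N ^ l * x = of_int q" using Nl by (auto elim: Ints_cases)
  have Epos: "E > 0" using N by (simp add: E_def)
  have NlE: "real N ^ l = real N * E" using l1 unfolding E_def by (metis Suc_diff_1 less_le_trans power_Suc zero_less_one)
  have Nlpos: "real N ^ l > 0" using N by simp
  have fl: "of_int f < E * x" using r unfolding f_def E_def
    by (metis Ints_of_int floor_correct order_le_less)
  have fu: "E * x < of_int f + 1" unfolding f_def by linarith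
  have qE: "of_int q = real N * (E * x)" using q NlE by simp
  have "real N * of_int f < of_int q" using fl qE N by simp
  hence "real_of_int (int N * f) < of_int q" by simp
  hence i1: "int N * f + 1 \<le> q" by (simp only: of_int_less_iff)
  have "of_int q < real N * (of_int f + 1)" using fu qE N by simp
  hence "real_of_int q < of_int (int N * f + int N)" by (simp add: distrib_left)
  hence i2: "q + 1 \<le> int N * f + int N" by (simp only: of_int_less_iff)
  have xq: "x = of_int q / real N ^ l" using q Nlpos by (simp add: field_simps)
  have powle: "real N ^ l \<le> real N ^ L" using lL N by (intro power_increasing) auto
  have inv: "1 / real N ^ L \<le> 1 / real N ^ l" using powle Nlpos by (simp add: frac_le)
  define lo where "lo = of_int f / E"
  define hi where "hi = (of_int f + 1) / E"
  have lo': "lo = (real N * of_int f) / real N ^ l" unfolding lo_def NlE using N by simp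
  have hi': "hi = (real N * of_int f + real N) / real N ^ l" unfolding hi_def NlE using N Epos by (simp add: field_simps)
  have "x - lo = (of_int q - real N * of_int f) / real N ^ l" unfolding xq lo' by (simp add: diff_divide_distrib)
  moreover have "of_int q - real N * of_int f \<ge> 1"
  proof -
    have "real_of_int (int N * f + 1) \<le> of_int q" using i1 by (simp only: of_int_le_iff)
    thus ?thesis by simp
  qed
  ultimately have d1: "x - lo \<ge> 1 / real N ^ l" using Nlpos by (simp add: divide_right_mono)
  have "hi - x = (real N * of_int f + real N - of_int q) / real N ^ l" unfolding xq hi' by (simp add: diff_divide_distrib)
  moreover have "real N * of_int f + real N - of_int q \<ge> 1"
  proof -
    have "real_of_int (q + 1) \<le> of_int (int N * f + int N)" using i2 by (simp only: of_int_le_iff)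
    thus ?thesis by simp
  qed
  ultimately have d2: "hi - x \<ge> 1 / real N ^ l" using Nlpos by (simp add: divide_right_mono)
  have Ipw: "real N powi (int l - 1) = E" using l1 by (simp add: E_def powi_l1)
  have left_eq: "nadic_left N (int l - 1) (f + 1) = lo" by (simp add: nadic_left_def Ipw lo_def)
  have right_eq: "nadic_right N (int l - 1) (f + 1) = hi" by (simp add: nadic_right_def Ipw hi_def)
  have J_eq: "nadic_interval N (int l - 1) (f + 1) = {lo..<hi}" by (simp add: nadic_interval_def left_eq right_eq)
  show ?thesis
  proof (intro exI conjI allI impI)
    show "{a..<b} \<subseteq> nadic_interval N (int l - 1) (f + 1)" unfolding J_eq using d1 d2 inv ha hb by auto
  next
    fix s'' t'' assume sub: "{a..<b} \<subseteq> nadic_interval N s'' t''"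
    have "a \<in> nadic_interval N s'' t''" "x \<in> nadic_interval N s'' t''" using sub ax xb by auto
    hence "nadic_left N s'' t'' < x" "x < nadic_right N s'' t''" using ax unfolding nadic_interval_def by auto
    thus "nadic_interval N (int l - 1) (f + 1) \<subseteq> nadic_interval N s'' t''"
      using grid_min[OF N l1 Nl r] unfolding f_def E_def by blast
  next
    show "interior_child_endpoint N (int l - 1) (f + 1) x"
      unfolding interior_child_endpoint_def
    proof (intro conjI bexI disjI1)
      show "q - int N * f + 1 \<in> {1..int N}" using i1 i2 by auto
      have "nadic_left N (int l - 1 + 1) ((f + 1 - 1) * int N + (q - int N * f + 1)) = of_int q / real N ^ l"
        by (simp add: nadic_left_def)
      thus "x = nadic_left N (int l - 1 + 1) ((f + 1 - 1) * int N + (q - int N * f + 1))" using xq by simp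
      have "1 / real N ^ l > 0" using Nlpos by simp
      hence "lo < x" "x < hi" using d1 d2 by linarith+
      thus "x \<in> interior (nadic_interval N (int l - 1) (f + 1))" unfolding J_eq by simp
    qed
  qed
qed
theorem proposition2p6:
  fixes p v :: nat and c :: "nat \<Rightarrow> nat" and k :: nat
    and J :: "real set" and \<epsilon> :: real
  assumes "prime p"
    and "\<forall>i\<in>{1..k}. c i > 0"
    and "v \<ge> 2" and "coprime v p"
    and "is_interval J" and "J \<subseteq> {0..1}" and "\<exists>x y. x \<in> J \<and> y \<in> J \<and> x < y"
    and "\<epsilon> > 0"
  shows "\<exists>s t. nadic_interval v s t \<subseteq> J \<and>
           (\<forall>i\<in>{1..k}. \<exists>s' t'.
              nadic_interval v s t \<subseteq> nadic_interval (p * c i) s' t' \<and>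
              (\<forall>s'' t''. nadic_interval v s t \<subseteq> nadic_interval (p * c i) s'' t'' \<longrightarrow>
                  nadic_interval (p * c i) s' t' \<subseteq> nadic_interval (p * c i) s'' t'') \<and>
              (\<exists>\<zeta>. interior_child_endpoint (p * c i) s' t' \<zeta> \<and>
                   0 < \<zeta> - Zpt v s t \<and>
                   \<zeta> - Zpt v s t \<le> \<epsilon> * measure lborel (nadic_interval v s t)))"
proof -
  note pr = assms(1) and cpos = assms(2) and v2 = assms(3) and cop = assms(4)
    and Jint = assms(5) and J01 = assms(6) and eps = assms(8)
  have p2: "p \<ge> 2" using pr by (simp add: prime_ge_2_nat)
  obtain \<alpha> \<beta> where \<alpha>J: "\<alpha> \<in> J" and \<beta>J: "\<beta> \<in> J" and \<alpha>\<beta>: "\<alpha> < \<beta>" using assms(7) by blast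
  have sub: "{\<alpha>..\<beta>} \<subseteq> J" proof
    fix y assume "y \<in> {\<alpha>..\<beta>}" thus "y \<in> J" using mem_is_interval_1_I[OF Jint \<alpha>J \<beta>J, of y] by simp
  qed
  have \<alpha>0: "0 \<le> \<alpha>" and \<beta>1: "\<beta> \<le> 1" using \<alpha>J \<beta>J J01 by auto
  have vr: "real v \<ge> 2" using v2 by simp
  define e where "e = min \<epsilon> (1 / (2 * real v))"
  have e0: "e > 0" using eps vr by (simp add: e_def)
  have ee: "e \<le> \<epsilon>" "e \<le> 1 / (2 * real v)" by (auto simp: e_def)
  obtain s1 where s1: "6 / (\<beta> - \<alpha>) < real v ^ s1" using real_arch_pow[of "real v" "6 / (\<beta> - \<alpha>)"] vr by auto
  define M where "M = real v ^ s1"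
  have M0: "M > 0" using vr by (simp add: M_def)
  have M6: "6 < M * (\<beta> - \<alpha>)" using s1 \<alpha>\<beta> unfolding M_def by (simp add: pos_divide_less_eq mult.commute)
  define n where "n = \<lceil>\<alpha> * M\<rceil> + 2"
  have n1: "\<alpha> * M + 2 \<le> of_int n" "of_int n < \<alpha> * M + 3" unfolding n_def by linarith+
  obtain L where L: "2 * M / e < real p ^ L" using real_arch_pow[of "real p" "2 * M / e"] p2 by auto
  define P where "P = real p ^ L"
  have P0: "P > 0" using p2 by (simp add: P_def)
  have MP: "M / P < e / 2" using L P0 e0 unfolding P_def[symmetric] by (simp add: field_simps)
  define w where "w = real_of_int n - 1 / real v"
  define u where "u = \<lfloor>w * P / M\<rfloor> + 1"
  have u1: "w * P / M < of_int u" "of_int u \<le> w * P / M + 1" unfolding u_def by linarith+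
  define \<delta> where "\<delta> = of_int u * M / P - w"
  have \<delta>0: "\<delta> > 0"
  proof -
    have "w * P / M * (M / P) < of_int u * (M / P)" using u1(1) M0 P0 by (intro mult_strict_right_mono) auto
    moreover have "w * P / M * (M / P) = w" using M0 P0 by simp
    moreover have "of_int u * (M / P) = of_int u * M / P" by simp
    ultimately show ?thesis unfolding \<delta>_def by linarith
  qed
  have \<delta>1: "\<delta> \<le> M / P"
  proof -
    have "of_int u * (M / P) \<le> (w * P / M + 1) * (M / P)" using u1(2) M0 P0 by (intro mult_right_mono) auto
    moreover have "(w * P / M + 1) * (M / P) = w + M / P" using M0 P0 by (simp add: field_simps)
    moreover have "of_int u * (M / P) = of_int u * M / P" by simp
    ultimately show ?thesis unfolding \<delta>_def by linarith
  qed
  have \<delta>e: "\<delta> \<le> e / 2" using \<delta>1 MP by linarith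
  have \<delta>v: "\<delta> < 1 / real v"
  proof -
    have "1 / (2 * real v) < 1 / real v" using vr by (simp add: frac_less2)
    thus ?thesis using \<delta>e ee(2) e0 by linarith
  qed
  define x where "x = of_int u / P"
  have xM: "x * M = w + \<delta>" unfolding x_def \<delta>_def using P0 by (simp add: field_simps)
  have "1 / real v \<le> 1/2" using vr by simp
  hence xlo: "\<alpha> * M + 1 < x * M" using xM n1 \<delta>0 unfolding w_def by linarith
  have "1/(2*real v) \<le> 1" "1 / real v \<ge> 0" using vr by simp_all
  hence xhi: "x * M < \<alpha> * M + 4" using xM n1 \<delta>e ee(2) unfolding w_def by linarith
  have xa: "\<alpha> + 1 / M < x" using xlo M0 by (simp add: field_simps)
  have xb: "x + 1 / M < \<beta>"
  proof -
    have "x * M + 1 < \<beta> * M" using xhi M6 by (simp add: algebra_simps)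
    thus ?thesis using M0 by (simp add: field_simps)
  qed
  have M1: "1 / M > 0" using M0 by simp
  have xnZ: "x \<notin> \<int>"
  proof
    assume "x \<in> \<int>" then obtain z where z: "x = of_int z" by (auto elim: Ints_cases)
    have "0 < x" "x < 1" using xa xb \<alpha>0 \<beta>1 M1 by linarith+
    thus False unfolding z by simp
  qed
  define PL where "PL = p ^ L"
  have PLr: "real PL = P" by (simp add: PL_def P_def)
  have PL0: "PL > 0" using p2 by (simp add: PL_def)
  define m where "m = totient PL"
  have m0: "m > 0" using PL0 by (simp add: m_def)
  have copL: "coprime v PL" using cop by (simp add: PL_def)
  have cg: "[v ^ m = 1] (mod PL)" unfolding m_def by (rule euler_theorem[OF copL])
  define Pall where "Pall = (\<Prod>i\<in>{1..k}. p * c i)"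
  have Pall0: "Pall > 0" unfolding Pall_def using cpos p2 by (intro prod_pos) auto
  have Nle: "p * c i \<le> Pall" if "i \<in> {1..k}" for i
    using Pall0 that unfolding Pall_def by (intro dvd_imp_le) (auto intro: dvd_prodI)
  define K0 where "K0 = m * (L * Pall)"
  define s where "s = s1 + K0"
  have cgK: "[v ^ K0 = 1] (mod PL)"
  proof -
    have "[(v ^ m) ^ (L * Pall) = 1 ^ (L * Pall)] (mod PL)" by (rule cong_pow[OF cg])
    thus ?thesis by (simp add: K0_def power_mult)
  qed
  have "[int (v ^ K0) = int 1] (mod int PL)" using cgK by (simp only: cong_int_iff)
  hence "int PL dvd int (v ^ K0) - 1" by (simp add: cong_iff_dvd_diff)
  then obtain D where D: "int (v ^ K0) - 1 = int PL * D" by blast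
  have Dr: "real v ^ K0 = 1 + P * of_int D"
  proof -
    have "real_of_int (int (v ^ K0) - 1) = of_int (int PL * D)" using D by simp
    thus ?thesis using PLr by simp
  qed
  define t where "t = n + u * int (v ^ s1) * D"
  define V where "V = real v ^ s"
  have VM: "V = M * real v ^ K0" by (simp add: V_def M_def s_def power_add)
  have V0: "V > 0" using vr by (simp add: V_def)
  have wd: "(w + \<delta>) * P = of_int u * M" unfolding \<delta>_def using P0 by (simp add: field_simps)
  have key: "x * V = of_int t - 1 / real v + \<delta>"
  proof -
    have "x * V = (x * M) * real v ^ K0" by (simp add: VM)
    also have "\<dots> = (w + \<delta>) + ((w + \<delta>) * P) * of_int D" unfolding xM Dr by (simp add: algebra_simps)
    also have "\<dots> = (w + \<delta>) + of_int u * M * of_int D" unfolding wd ..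
    also have "\<dots> = of_int t - 1 / real v + \<delta>" by (simp add: t_def w_def M_def)
    finally show ?thesis .
  qed
  define a where "a = of_int (t - 1) / V"
  define b where "b = of_int t / V"
  have Ieq: "nadic_interval v (int s) t = {a..<b}"
    by (simp add: nadic_interval_def nadic_left_def nadic_right_def a_def b_def V_def)
  have xV: "x = (of_int t - 1 / real v + \<delta>) / V" using key V0 by (simp add: field_simps)
  have xa_eq: "x - a = (1 - 1 / real v + \<delta>) / V" unfolding xV a_def using V0 by (simp add: field_simps)
  have bx_eq: "b - x = (1 / real v - \<delta>) / V" unfolding xV b_def using V0 by (simp add: field_simps)
  have ba_eq: "b - a = 1 / V" unfolding a_def b_def using V0 by (simp add: field_simps)
  have "1 / real v \<le> 1" using vr by simp
  hence c1: "0 < 1 - 1 / real v + \<delta>" "1 - 1 / real v + \<delta> \<le> 1" "0 < 1 / real v - \<delta>" "1 / real v - \<delta> \<le> 1"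
    using \<delta>0 \<delta>v by auto
  have "(1 - 1 / real v + \<delta>) / V > 0" "(1 / real v - \<delta>) / V > 0" using c1 V0 by simp_all
  hence ax: "a < x" and xb': "x < b" using xa_eq bx_eq by linarith+
  have xa1: "x - a \<le> 1 / V" unfolding xa_eq using c1 V0 by (intro divide_right_mono) auto
  have bx1: "b - x \<le> 1 / V" unfolding bx_eq using c1 V0 by (intro divide_right_mono) auto
  have VgeM: "M \<le> V" unfolding V_def M_def s_def using vr by (intro power_increasing) auto
  have iVM: "1 / V \<le> 1 / M" using VgeM M0 by (simp add: frac_le)
  have IJ: "nadic_interval v (int s) t \<subseteq> J"
  proof -
    have "\<alpha> \<le> a" "b \<le> \<beta>" using xa bx1 xa1 iVM xb by linarith+
    hence "{a..<b} \<subseteq> {\<alpha>..\<beta>}" by auto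
    thus ?thesis using sub Ieq by auto
  qed
  have Zeq: "Zpt v (int s) t = (of_int t - 1 / real v) / V"
  proof -
    have pw: "real v powi (int s + 1) = real v * V" 
      by (metis V_def of_nat_Suc power_Suc power_int_of_nat add.commute)
    show ?thesis unfolding Zpt_def pw using V0 vr by (simp add: V_def field_simps)
  qed
  have xZ: "x - Zpt v (int s) t = \<delta> / V" unfolding Zeq xV using V0 by (simp add: field_simps)
  have meas: "measure lborel (nadic_interval v (int s) t) = 1 / V" unfolding Ieq using ax xb' ba_eq by simp
  have zz1: "0 < x - Zpt v (int s) t" unfolding xZ using \<delta>0 V0 by simp
  have zz2: "x - Zpt v (int s) t \<le> \<epsilon> * measure lborel (nadic_interval v (int s) t)"
    unfolding xZ meas using \<delta>e ee(1) e0 V0 by (simp add: divide_right_mono)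
  have ALL: "\<forall>i\<in>{1..k}. \<exists>s' t'. nadic_interval v (int s) t \<subseteq> nadic_interval (p * c i) s' t' \<and>
              (\<forall>s'' t''. nadic_interval v (int s) t \<subseteq> nadic_interval (p * c i) s'' t'' \<longrightarrow>
                  nadic_interval (p * c i) s' t' \<subseteq> nadic_interval (p * c i) s'' t'') \<and>
              (\<exists>\<zeta>. interior_child_endpoint (p * c i) s' t' \<zeta> \<and>
                   0 < \<zeta> - Zpt v (int s) t \<and>
                   \<zeta> - Zpt v (int s) t \<le> \<epsilon> * measure lborel (nadic_interval v (int s) t))"
  proof
    fix i assume i: "i \<in> {1..k}"
    define N where "N = p * c i"
    have "c i > 0" using cpos i by blast
    hence ci: "c i \<ge> 1" by simp
    have N2: "N \<ge> 2" unfolding N_def using p2 ci by (metis mult_le_mono nat_mult_1_right order_trans)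
    have NL: "real N ^ L * x \<in> \<int>"
    proof -
      have "real N ^ L * x = real (c i) ^ L * of_int u" unfolding N_def x_def P_def using p2
        by (simp add: power_mult_distrib)
      thus ?thesis by simp
    qed
    have NLV: "real N ^ L \<le> V"
    proof -
      have "N ^ L \<le> Pall ^ L" using Nle[OF i] unfolding N_def by (rule power_mono) simp
      also have "\<dots> \<le> (2 ^ Pall) ^ L" by (rule power_mono) (simp_all add: less_imp_le_nat)
      also have "\<dots> = 2 ^ (L * Pall)" by (simp add: power_mult[symmetric] mult.commute)
      also have "\<dots> \<le> v ^ (L * Pall)" using v2 by (rule power_mono) simp
      also have "\<dots> \<le> v ^ s"
      proof -
        have "1 * (L * Pall) \<le> m * (L * Pall)" using m0 by (intro mult_right_mono) auto
        hence "L * Pall \<le> m * (L * Pall)" by (simp only: mult_1)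
        hence "L * Pall \<le> s" unfolding s_def K0_def by linarith
        thus ?thesis using v2 by (intro power_increasing) auto
      qed
      finally have "real (N ^ L) \<le> real (v ^ s)" by (simp only: of_nat_le_iff)
      thus ?thesis by (simp add: V_def)
    qed
    have NL0: "real N ^ L > 0" using N2 by simp
    have iV: "1 / V \<le> 1 / real N ^ L" using NLV NL0 by (simp add: frac_le)
    obtain s' t' where st: "{a..<b} \<subseteq> nadic_interval N s' t'"
      "\<forall>s'' t''. {a..<b} \<subseteq> nadic_interval N s'' t'' \<longrightarrow> nadic_interval N s' t' \<subseteq> nadic_interval N s'' t''"
      "interior_child_endpoint N s' t' x"
      using per_i[OF N2 xnZ NL ax xb'] xa1 bx1 iV by fastforce
    show "\<exists>s' t'. nadic_interval v (int s) t \<subseteq> nadic_interval (p * c i) s' t' \<and>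
              (\<forall>s'' t''. nadic_interval v (int s) t \<subseteq> nadic_interval (p * c i) s'' t'' \<longrightarrow>
                  nadic_interval (p * c i) s' t' \<subseteq> nadic_interval (p * c i) s'' t'') \<and>
              (\<exists>\<zeta>. interior_child_endpoint (p * c i) s' t' \<zeta> \<and>
                   0 < \<zeta> - Zpt v (int s) t \<and>
                   \<zeta> - Zpt v (int s) t \<le> \<epsilon> * measure lborel (nadic_interval v (int s) t))"
      using st zz1 zz2 unfolding Ieq N_def by blast
  qed
  show ?thesis using IJ ALL by blast
qed
end
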